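(* Let $g:\mathbb{R}^N\to\mathbb{R}\cup\{+\infty\}$ be proper and lower semi-continuous, let $f:\mathbb{R}^N\to\mathbb{R}$ be continuously differentiable such that, for some $\mathbf{L}\in\mathbb{S}_{++}(N)$, the gradient of $f\circ\mathbf{L}^{-1/2}$ is $1$-Lipschitz continuous, and assume $f^g:=f+g$ is bounded from below. Fix $a>0$, $x_0\in\mathbb{R}^N$, and a sequence of matrices $\mathbf{D}_k\in\mathbb{R}^{N\times R}$. For $k\ge0$ and $\boldsymbol\beta\in\mathbb{R}^R$ let $y^{(\boldsymbol\beta)}_k:=x_k+\mathbf{D}_k\boldsymbol\beta$ and $\ell(x;y):=g(x)+f(y)+\langle\nabla f(y),x-y\rangle$. Suppose the sequences $(x_k)_{k}$, $(\boldsymbol\beta_k)_k$, and symmetric matrices $(\mathbf{L}_k)_k$, $(\mathbf{T}_k)_k$ satisfy for all $k\ge0$: $$(x_{k+1},\boldsymbol\beta_k)\in\operatorname*{argmin}_{x\in\mathbb{R}^N}\min_{\boldsymbol\beta\in\mathbb{R}^R}\ \ell(x;y_k^{(\boldsymbol\beta)})+\tfrac12\|x-y_k^{(\boldsymbol\beta)}\|_{\mathbf{T}_k}^2,$$ $\mathbf{T}_k-\mathbf{L}_k-a\mathbf{I}\in\mathbb{S}_+(N)$, and $$f(x_{k+1})\le f(y_k^{(\boldsymbol\beta_k)})+\langle\nabla f(y_k^{(\boldsymbol\beta_k)}),x_{k+1}-y_k^{(\boldsymbol\beta_k)}\rangle+\tfrac12\|x_{k+1}-y_k^{(\boldsymbol\beta_k)}\|_{\mathbf{L}_k}^2.$$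 Suppose $(\mathbf{T}_k)_{k\in\mathbb{N}}$ is bounded. Then the sequence $(f^g(x_k))_{k\in\mathbb{N}}$ is non-increasing and every limit point of $(x_{k+1})_{k\in\mathbb{N}}$ is a stationary point of $f^g$.
   Context: $\mathbb{S}_{+}(N)$ (resp. $\mathbb{S}_{++}(N)$) denotes the set of symmetric positive semi-definite (resp. positive definite) $N\times N$ real matrices; $\mathbf{I}$ is the identity; $\|x\|_{\mathbf{V}}^2:=\langle x,\mathbf{V}x\rangle$. The Fréchet subdifferential $\hat\partial h(\bar x)$ of $h:\mathbb{R}^N\to\mathbb{R}\cup\{+\infty\}$ at $\bar x\in\operatorname{dom}h$ is the set of $v$ with $\liminf_{x\to\bar x,x\ne\bar x}\frac{h(x)-h(\bar x)-\langle v,x-\bar x\rangle}{\|x-\bar x\|}\ge0$; the limiting subdifferential $\partial h(\bar x)$ is the set of $v$ for which there exist $x_k\to\bar x$ with $h(x_k)\to h(\bar x)$ and $v_k\in\hat\partial h(x_k)$ with $v_k\to v$ (both empty outside $\operatorname{dom}h$). A stationary point of $h$ is a point $\bar x\in\operatorname{dom} h$ with $0\in\partial h(\bar x)$. *)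

theory Defs
  imports "HOL-Analysis.Analysis"
begin

definition psd_mat :: "real^'n^'n \<Rightarrow> bool" where
  "psd_mat A \<longleftrightarrow> transpose A = A \<and> (\<forall>x. 0 \<le> x \<bullet> (A *v x))"

definition pd_mat :: "real^'n^'n \<Rightarrow> bool" where
  "pd_mat A \<longleftrightarrow> transpose A = A \<and> (\<forall>x. x \<noteq> 0 \<longrightarrow> 0 < x \<bullet> (A *v x))"

definition wnorm2 :: "real^'n^'n \<Rightarrow> real^'n \<Rightarrow> real" where
  "wnorm2 V x = x \<bullet> (V *v x)"

definition edom :: "('a \<Rightarrow> ereal) \<Rightarrow> 'a set" where
  "edom h = {x. h x < \<infinity>}"

definition proper_fun :: "('a \<Rightarrow> ereal) \<Rightarrow> bool" where
  "proper_fun h \<longleftrightarrow> (\<forall>x. h x \<noteq> -\<infinity>) \<and> (\<exists>x. h x < \<infinity>)"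

definition lsc_fun :: "('a::topological_space \<Rightarrow> ereal) \<Rightarrow> bool" where
  "lsc_fun h \<longleftrightarrow> (\<forall>x. h x \<le> Liminf (at x) h)"

definition frechet_subdiff :: "('a::real_inner \<Rightarrow> ereal) \<Rightarrow> 'a \<Rightarrow> 'a set" where
  "frechet_subdiff h xb =
     (if xb \<in> edom h then
        {v. 0 \<le> Liminf (at xb)
              (\<lambda>x. (h x - h xb - ereal (v \<bullet> (x - xb))) / ereal (norm (x - xb)))}
      else {})"

definition limiting_subdiff :: "('a::real_inner \<Rightarrow> ereal) \<Rightarrow> 'a \<Rightarrow> 'a set" where
  "limiting_subdiff h xb =
     (if xb \<in> edom h then
        {v. \<exists>X V. X \<longlonglongrightarrow> xb \<and> (\<lambda>k. h (X k)) \<longlonglongrightarrow> h xb \<and>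
                  (\<forall>k. V k \<in> frechet_subdiff h (X k)) \<and> V \<longlonglongrightarrow> v}
      else {})"

definition stationary_point :: "('a::real_inner \<Rightarrow> ereal) \<Rightarrow> 'a \<Rightarrow> bool" where
  "stationary_point h xb \<longleftrightarrow> xb \<in> edom h \<and> 0 \<in> limiting_subdiff h xb"

end

theory Submission
  imports Defs
begin

lemma mv_bound:
  fixes T :: "real^'n^'m"
  assumes "norm T \<le> M"
  shows "norm (T *v w) \<le> real CARD('m) * real CARD('n) * M * norm w"
proof -
  have B: "\<And>i j. \<bar>T$i$j\<bar> \<le> M"
  proof -
    fix i j
    have "\<bar>T$i$j\<bar> \<le> norm (T$i)" by (rule component_le_norm_cart)
    also have "\<dots> \<le> norm T" by (rule Finite_Cartesian_Product.norm_nth_le)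
    finally show "\<bar>T$i$j\<bar> \<le> M" using assms by simp
  qed
  have "norm (T *v w) \<le> (\<Sum>i\<in>UNIV. \<bar>(T *v w) $ i\<bar>)"
    by (rule norm_le_l1_cart)
  also have "\<dots> \<le> (\<Sum>i::'m \<in>UNIV. real (CARD('n)) * M * norm w)"
  proof (rule sum_mono)
    fix i
    have "\<bar>(T *v w) $ i\<bar> \<le> norm(T $ i) * norm w"
      by (simp add: matrix_mult_dot Cauchy_Schwarz_ineq2)
    also have "\<dots> \<le> (\<Sum>j\<in>UNIV. \<bar>T $ i $ j\<bar>) * norm w"
      by (simp add: mult_right_mono norm_le_l1_cart)
    also have "\<dots> \<le> real (CARD('n)) * M * norm w"
      by (simp add: B sum_bounded_above mult_right_mono)
    finally show "\<bar>(T *v w) $ i\<bar> \<le> real (CARD('n)) * M * norm w" .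
  qed
  also have "\<dots> \<le> CARD('m) * real (CARD('n)) * M * norm w"
    by simp
  finally show ?thesis .
qed

lemma wnorm2_bound:
  fixes T :: "real^'n^'n"
  assumes "norm T \<le> M"
  shows "\<bar>wnorm2 T w\<bar> \<le> real CARD('n) * real CARD('n) * M * norm w ^ 2"
proof -
  have "\<bar>wnorm2 T w\<bar> \<le> norm w * norm (T *v w)"
    unfolding wnorm2_def by (rule Cauchy_Schwarz_ineq2)
  also have "\<dots> \<le> norm w * (real CARD('n) * real CARD('n) * M * norm w)"
    by (rule mult_left_mono[OF mv_bound[OF assms]]) simp
  finally show ?thesis by (simp add: power2_eq_square algebra_simps)
qed

lemma sym_inner:
  fixes T :: "real^'n^'n"
  assumes "transpose T = T"
  shows "u \<bullet> (T *v v) = v \<bullet> (T *v u)"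
proof -
  have "u \<bullet> (T *v v) = (u v* T) \<bullet> v" by (simp add: dot_lmul_matrix)
  also have "\<dots> = (transpose T *v u) \<bullet> v" by simp
  finally show ?thesis using assms by (simp add: inner_commute)
qed

lemma wnorm2_expand:
  fixes T :: "real^'n^'n"
  assumes "transpose T = T"
  shows "wnorm2 T (w + d) = wnorm2 T w + 2 * (w \<bullet> (T *v d)) + wnorm2 T d"
  unfolding wnorm2_def using sym_inner[OF assms, of d w]
  by (simp add: matrix_vector_right_distrib inner_add_left inner_add_right)

lemma lsc_seq:
  fixes g :: "'a::topological_space \<Rightarrow> ereal"
  assumes "lsc_fun g" "X \<longlonglongrightarrow> xb"
  shows "g xb \<le> liminf (\<lambda>j. g (X j))"
  unfolding le_Liminf_iff
proof (intro allI impI)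
  fix y assume y: "y < g xb"
  then have "y < Liminf (at xb) g" using assms(1) unfolding lsc_fun_def
    using order_less_le_trans by blast
  then have "eventually (\<lambda>z. y < g z) (at xb)"
    using less_LiminfD by blast
  with y have "eventually (\<lambda>z. y < g z) (nhds xb)"
    by (simp add: eventually_nhds_conv_at)
  then show "eventually (\<lambda>j. y < g (X j)) sequentially"
    by (rule eventually_compose_filterlim[OF _ assms(2)])
qed

lemma frechet_lemma:
  fixes h :: "real^'n \<Rightarrow> ereal"
  assumes hx: "h x1 = ereal c"
    and lb: "\<And>z. ereal (c + v \<bullet> (z - x1) + e z * norm (z - x1)) \<le> h z"
    and e0: "(e \<longlongrightarrow> 0) (at x1)"
  shows "v \<in> frechet_subdiff h x1"
proof -
  let ?q = "\<lambda>z. (h z - h x1 - ereal (v \<bullet> (z - x1))) / ereal (norm (z - x1))"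
  have pt: "ereal (e z) \<le> ?q z" if "z \<noteq> x1" for z
  proof -
    have n: "norm (z - x1) > 0" using that by simp
    show "ereal (e z) \<le> ?q z"
    proof (cases "h z")
      case (real r)
      have "c + v \<bullet> (z - x1) + e z * norm (z - x1) \<le> r" using lb[of z] real by simp
      then have "e z * norm (z - x1) \<le> r - c - v \<bullet> (z - x1)" by simp
      then have le: "e z \<le> (r - c - v \<bullet> (z - x1)) / norm (z - x1)"
        using n by (simp add: pos_le_divide_eq)
      have "?q z = ereal ((r - c - v \<bullet> (z - x1)) / norm (z - x1))"
        using real hx n by simp
      then show ?thesis using le by simp
    next
      case PInf
      have "?q z = \<infinity>" using PInf hx n by simp
      then show ?thesis by simp
    next
      case MInf
      then show ?thesis using lb[of z] by simp
    qed
  qed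
  have ev: "eventually (\<lambda>z. ereal (e z) \<le> ?q z) (at x1)"
    unfolding eventually_at_filter using pt by (intro always_eventually) blast
  have t: "((\<lambda>z. ereal (e z)) \<longlongrightarrow> ereal 0) (at x1)"
    using e0 by (rule tendsto_ereal)
  have "Liminf (at x1) (\<lambda>z. ereal (e z)) = ereal 0"
    by (rule lim_imp_Liminf[OF _ t]) simp
  then have "0 = Liminf (at x1) (\<lambda>z. ereal (e z))" by (simp add: zero_ereal_def)
  also have "\<dots> \<le> Liminf (at x1) ?q"
    by (rule Liminf_mono[OF ev])
  finally have L: "0 \<le> Liminf (at x1) ?q" .
  have "x1 \<in> edom h" using hx by (simp add: edom_def)
  then show ?thesis unfolding frechet_subdiff_def using L by (simp only: if_True mem_Collect_eq)
qed

lemma min_frechet: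
  fixes g :: "real^'n \<Rightarrow> ereal" and f :: "real^'n \<Rightarrow> real" and gradf :: "real^'n \<Rightarrow> real^'n"
    and T :: "real^'n^'n"
  assumes f_grad: "\<And>z. (f has_derivative (\<lambda>h. gradf z \<bullet> h)) (at z)"
    and Tsym: "transpose T = T"
    and gx: "g x1 = ereal cg"
    and mn: "\<And>z. g x1 + ereal (p \<bullet> (x1 - y) + wnorm2 T (x1 - y) / 2)
                 \<le> g z + ereal (p \<bullet> (z - y) + wnorm2 T (z - y) / 2)"
  shows "gradf x1 - p - T *v (x1 - y) \<in> frechet_subdiff (\<lambda>z. ereal (f z) + g z) x1"
proof -
  define d where "d = x1 - y"
  define v where "v = gradf x1 - p - T *v d"
  define e where "e z = (f z - f x1 - gradf x1 \<bullet> (z - x1) - wnorm2 T (z - x1) / 2) / norm (z - x1)" for z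
  have gz: "ereal (cg - p \<bullet> (z - x1) - (T *v d) \<bullet> (z - x1) - wnorm2 T (z - x1) / 2) \<le> g z" for z
  proof -
    define w where "w = z - x1"
    have zy: "z - y = w + d" unfolding w_def d_def by simp
    have ex: "wnorm2 T (z - y) = wnorm2 T w + 2 * (w \<bullet> (T *v d)) + wnorm2 T d"
      unfolding zy by (rule wnorm2_expand[OF Tsym])
    have m: "ereal cg + ereal (p \<bullet> d + wnorm2 T d / 2)
                 \<le> g z + ereal (p \<bullet> (w + d) + wnorm2 T (w + d) / 2)"
    proof -
      have "ereal cg + ereal (p \<bullet> d + wnorm2 T d / 2)
                 \<le> g z + ereal (p \<bullet> (z - y) + wnorm2 T (z - y) / 2)"
        using mn[of z] gx unfolding d_def by simp
      then show ?thesis unfolding zy .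
    qed
    have eqn: "cg - p \<bullet> w - (T *v d) \<bullet> w - wnorm2 T w / 2
        = cg + (p \<bullet> d + wnorm2 T d / 2) - (p \<bullet> (w + d) + wnorm2 T (w + d) / 2)"
      using ex zy by (simp add: inner_add_left inner_commute algebra_simps)
    have le: "ereal (cg + (p \<bullet> d + wnorm2 T d / 2) - (p \<bullet> (w + d) + wnorm2 T (w + d) / 2)) \<le> g z"
    proof (cases "g z")
      case (real r)
      then show ?thesis using m by simp
    next
      case PInf
      then show ?thesis by simp
    next
      case MInf
      then show ?thesis using m by simp
    qed
    have "ereal (cg - p \<bullet> w - (T *v d) \<bullet> w - wnorm2 T w / 2) \<le> g z"
      unfolding eqn by (rule le)
    then show ?thesis unfolding w_def .
  qed
  have hx: "ereal (f x1) + g x1 = ereal (f x1 + cg)" using gx by simp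
  have lb: "ereal (f x1 + cg + v \<bullet> (z - x1) + e z * norm (z - x1)) \<le> ereal (f z) + g z" for z
  proof -
    have eq: "f x1 + cg + v \<bullet> (z - x1) + e z * norm (z - x1)
        = f z + (cg - p \<bullet> (z - x1) - (T *v d) \<bullet> (z - x1) - wnorm2 T (z - x1) / 2)"
    proof (cases "z = x1")
      case True
      then show ?thesis by (simp add: e_def wnorm2_def)
    next
      case False
      then have "norm (z - x1) \<noteq> 0" by simp
      then have "e z * norm (z - x1) = f z - f x1 - gradf x1 \<bullet> (z - x1) - wnorm2 T (z - x1) / 2"
        unfolding e_def by simp
      then show ?thesis unfolding v_def by (simp add: inner_diff_left algebra_simps)
    qed
    have "ereal (f z + (cg - p \<bullet> (z - x1) - (T *v d) \<bullet> (z - x1) - wnorm2 T (z - x1) / 2))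
       = ereal (f z) + ereal (cg - p \<bullet> (z - x1) - (T *v d) \<bullet> (z - x1) - wnorm2 T (z - x1) / 2)"
      by simp
    also have "\<dots> \<le> ereal (f z) + g z"
      by (rule add_left_mono[OF gz])
    finally show ?thesis unfolding eq .
  qed
  have A: "((\<lambda>z. (f z - f x1 - gradf x1 \<bullet> (z - x1)) / norm (z - x1)) \<longlongrightarrow> 0) (at x1)"
  proof -
    have "((\<lambda>z. norm ((f z - f x1) - gradf x1 \<bullet> (z - x1)) / norm (z - x1)) \<longlongrightarrow> 0) (at x1)"
      using f_grad[of x1] unfolding has_derivative_iff_norm by blast
    then show ?thesis
      by (rule Lim_null_comparison[rotated]) (simp add: abs_divide)
  qed
  have Tz: "((\<lambda>z. T *v (z - x1)) \<longlongrightarrow> 0) (at x1)"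
  proof -
    have "((\<lambda>z. z - x1) \<longlongrightarrow> 0) (at x1)"
      using tendsto_diff[OF tendsto_ident_at[of x1 UNIV] tendsto_const[of x1]] by simp
    then show ?thesis by (rule bounded_linear.tendsto_zero[OF matrix_vector_mul_bounded_linear])
  qed
  have B: "((\<lambda>z. wnorm2 T (z - x1) / 2 / norm (z - x1)) \<longlongrightarrow> 0) (at x1)"
  proof (rule Lim_null_comparison)
    show "((\<lambda>z. norm (T *v (z - x1)) / 2) \<longlongrightarrow> 0) (at x1)"
      using tendsto_divide[OF tendsto_norm_zero[OF Tz] tendsto_const, of 2] by simp
    show "eventually (\<lambda>z. norm (wnorm2 T (z - x1) / 2 / norm (z - x1)) \<le> norm (T *v (z - x1)) / 2) (at x1)"
    proof (rule always_eventually, rule allI)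
      fix z
      have cs: "\<bar>wnorm2 T (z - x1)\<bar> \<le> norm (z - x1) * norm (T *v (z - x1))"
        unfolding wnorm2_def by (rule Cauchy_Schwarz_ineq2)
      show "norm (wnorm2 T (z - x1) / 2 / norm (z - x1)) \<le> norm (T *v (z - x1)) / 2"
      proof (cases "z = x1")
        case True then show ?thesis by simp
      next
        case False
        then have n: "norm (z - x1) > 0" by simp
        have "\<bar>wnorm2 T (z - x1)\<bar> / norm (z - x1) \<le> norm (T *v (z - x1))"
          using cs n by (simp add: divide_le_eq mult.commute)
        then show ?thesis using n by (simp add: abs_divide)
      qed
    qed
  qed
  have e0: "(e \<longlongrightarrow> 0) (at x1)"
  proof -
    have "e = (\<lambda>z. (f z - f x1 - gradf x1 \<bullet> (z - x1)) / norm (z - x1) - wnorm2 T (z - x1) / 2 / norm (z - x1))"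
      unfolding e_def by (intro ext) (simp add: diff_divide_distrib)
    then show ?thesis using tendsto_diff[OF A B] by simp
  qed
  have "v \<in> frechet_subdiff (\<lambda>z. ereal (f z) + g z) x1"
    by (rule frechet_lemma[OF hx lb e0])
  then show ?thesis unfolding v_def d_def .
qed

lemma ereal_cancel:
  fixes a e :: ereal
  assumes "a + ereal (c + b1) \<le> e + ereal (c + b2)" "a \<noteq> -\<infinity>"
  shows "a + ereal b1 \<le> e + ereal b2"
  using assms by (cases a; cases e) auto

lemma scal_mat_mv: "(a *\<^sub>R mat 1) *v v = a *\<^sub>R (v::real^'n)"
proof -
  have "\<And>i j. ((a *\<^sub>R mat 1) $ i $ j) * v $ j = (if j = i then a * v $ i else 0)"
    by (simp add: mat_def)
  then show ?thesis by (simp add: vec_eq_iff matrix_vector_mult_def)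
qed

theorem mainTheorem3:
  fixes g :: "real^'n \<Rightarrow> ereal"
    and f :: "real^'n \<Rightarrow> real"
    and gradf :: "real^'n \<Rightarrow> real^'n"
    and a :: real
    and x :: "nat \<Rightarrow> real^'n"
    and beta :: "nat \<Rightarrow> real^'r"
    and D :: "nat \<Rightarrow> real^'r^'n"
    and Lk Tk :: "nat \<Rightarrow> real^'n^'n"
  assumes g_proper: "proper_fun g"
    and g_lsc: "lsc_fun g"
    and f_grad: "\<And>z. (f has_derivative (\<lambda>h. gradf z \<bullet> h)) (at z)"
    and f_C1: "continuous_on UNIV gradf"
    and f_Lsmooth: "\<exists>L S G. pd_mat L \<and> pd_mat S \<and> S ** S = matrix_inv L \<and>
                      (\<forall>z. ((\<lambda>w. f (S *v w)) has_derivative (\<lambda>h. G z \<bullet> h)) (at z)) \<and>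
                      1-lipschitz_on UNIV G"
    and fg_bdd: "\<exists>c. \<forall>z. ereal c \<le> ereal (f z) + g z"
    and a_pos: "a > 0"
    and Lk_sym: "\<And>k. transpose (Lk k) = Lk k"
    and Tk_sym: "\<And>k. transpose (Tk k) = Tk k"
    and argmin: "\<And>k z b.
        g (x (Suc k)) + ereal (f (x k + D k *v beta k)
            + gradf (x k + D k *v beta k) \<bullet> (x (Suc k) - (x k + D k *v beta k))
            + wnorm2 (Tk k) (x (Suc k) - (x k + D k *v beta k)) / 2)
        \<le> g z + ereal (f (x k + D k *v b)
            + gradf (x k + D k *v b) \<bullet> (z - (x k + D k *v b))
            + wnorm2 (Tk k) (z - (x k + D k *v b)) / 2)"
    and TLa_psd: "\<And>k. psd_mat (Tk k - Lk k - a *\<^sub>R mat 1)"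
    and descent: "\<And>k. f (x (Suc k)) \<le> f (x k + D k *v beta k)
            + gradf (x k + D k *v beta k) \<bullet> (x (Suc k) - (x k + D k *v beta k))
            + wnorm2 (Lk k) (x (Suc k) - (x k + D k *v beta k)) / 2"
    and Tk_bdd: "bounded (range Tk)"
  shows "decseq (\<lambda>k. ereal (f (x k)) + g (x k)) \<and>
         (\<forall>xb. (\<exists>r. strict_mono r \<and> (\<lambda>j. x (Suc (r j))) \<longlonglongrightarrow> xb) \<longrightarrow>
               stationary_point (\<lambda>z. ereal (f z) + g z) xb)"
proof -
  define y where "y k = x k + D k *v beta k" for k
  define d where "d k = x (Suc k) - y k" for k
  define Q where "Q k = f (y k) + gradf (y k) \<bullet> d k + wnorm2 (Tk k) (d k) / 2" for k
  obtain c where c: "\<And>z. ereal c \<le> ereal (f z) + g z" using fg_bdd by blast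
  obtain z0 where z0: "g z0 < \<infinity>" using g_proper unfolding proper_fun_def by blast
  have gnm: "\<And>z. g z \<noteq> -\<infinity>" using g_proper unfolding proper_fun_def by blast
  have am: "g (x (Suc k)) + ereal (Q k) \<le> g z + ereal (f (x k + D k *v b)
            + gradf (x k + D k *v b) \<bullet> (z - (x k + D k *v b))
            + wnorm2 (Tk k) (z - (x k + D k *v b)) / 2)" for k z b
    using argmin[of k z b] unfolding Q_def d_def y_def .
  have am0: "g (x (Suc k)) + ereal (Q k) \<le> g (x k) + ereal (f (x k))" for k
    using am[of k "x k" 0] by (simp add: wnorm2_def)
  have fQ: "f (x (Suc k)) + a / 2 * norm (d k) ^ 2 \<le> Q k" for k
  proof -
    have "0 \<le> d k \<bullet> ((Tk k - Lk k - a *\<^sub>R mat 1) *v d k)"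
      using TLa_psd[of k] unfolding psd_mat_def by blast
    also have "\<dots> = wnorm2 (Tk k) (d k) - wnorm2 (Lk k) (d k) - a * norm (d k) ^ 2"
      by (simp add: wnorm2_def matrix_vector_mult_diff_rdistrib inner_diff_right
            power2_norm_eq_inner scal_mat_mv)
    finally have "a * norm (d k) ^ 2 \<le> wnorm2 (Tk k) (d k) - wnorm2 (Lk k) (d k)" by simp
    moreover have "f (x (Suc k)) \<le> f (y k) + gradf (y k) \<bullet> d k + wnorm2 (Lk k) (d k) / 2"
      using descent[of k] unfolding d_def y_def .
    ultimately show ?thesis unfolding Q_def by simp
  qed
  have dec: "ereal (f (x (Suc k))) + g (x (Suc k)) + ereal (a / 2 * norm (d k) ^ 2)
      \<le> ereal (f (x k)) + g (x k)" for k
  proof -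
    have "ereal (f (x (Suc k))) + g (x (Suc k)) + ereal (a / 2 * norm (d k) ^ 2)
        = g (x (Suc k)) + ereal (f (x (Suc k)) + a / 2 * norm (d k) ^ 2)"
      by (cases "g (x (Suc k))") auto
    also have "\<dots> \<le> g (x (Suc k)) + ereal (Q k)"
      using fQ[of k] by (intro add_left_mono) simp
    also have "\<dots> \<le> g (x k) + ereal (f (x k))" by (rule am0)
    finally show ?thesis by (simp add: add.commute)
  qed
  have decF: "decseq (\<lambda>k. ereal (f (x k)) + g (x k))"
  proof (rule decseq_SucI)
    fix k
    have "ereal (f (x (Suc k))) + g (x (Suc k)) \<le> ereal (f (x (Suc k))) + g (x (Suc k)) + ereal (a / 2 * norm (d k) ^ 2)"
      using a_pos by (cases "g (x (Suc k))") auto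
    also have "\<dots> \<le> ereal (f (x k)) + g (x k)" by (rule dec)
    finally show "ereal (f (x (Suc k))) + g (x (Suc k)) \<le> ereal (f (x k)) + g (x k)" .
  qed
  have gfin: "g (x (Suc k)) \<noteq> \<infinity>" for k
  proof
    assume "g (x (Suc k)) = \<infinity>"
    then have "g z0 + ereal (f (x k + D k *v 0)
            + gradf (x k + D k *v 0) \<bullet> (z0 - (x k + D k *v 0))
            + wnorm2 (Tk k) (z0 - (x k + D k *v 0)) / 2) = \<infinity>"
      using am[of k z0 0] by simp
    then show False using z0 by simp
  qed
  define Fr where "Fr k = f (x (Suc k)) + real_of_ereal (g (x (Suc k)))" for k
  have FrE: "ereal (f (x (Suc k))) + g (x (Suc k)) = ereal (Fr k)" for k
    using gfin[of k] gnm[of "x (Suc k)"] unfolding Fr_def by (cases "g (x (Suc k))") auto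
  have Fr_step: "Fr (Suc k) + a / 2 * norm (d (Suc k)) ^ 2 \<le> Fr k" for k
    using dec[of "Suc k"] unfolding FrE by simp
  have Fr_lb: "c \<le> Fr k" for k using c[of "x (Suc k)"] unfolding FrE by simp
  have decFr: "decseq Fr"
  proof (rule decseq_SucI)
    fix k have "0 \<le> a / 2 * norm (d (Suc k)) ^ 2" using a_pos by simp
    then show "Fr (Suc k) \<le> Fr k" using Fr_step[of k] by linarith
  qed
  obtain Lm where Lm: "Fr \<longlonglongrightarrow> Lm" using decseq_convergent[OF decFr, of c] Fr_lb by blast
  have dlim: "d \<longlonglongrightarrow> 0"
  proof -
    have diff0: "(\<lambda>k. Fr k - Fr (Suc k)) \<longlonglongrightarrow> 0"
      using tendsto_diff[OF Lm LIMSEQ_Suc[OF Lm]] by simp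
    have "(\<lambda>k. a / 2 * norm (d (Suc k)) ^ 2) \<longlonglongrightarrow> 0"
    proof (rule Lim_null_comparison[OF _ diff0], rule always_eventually, rule allI)
      fix k
      have "0 \<le> a / 2 * norm (d (Suc k)) ^ 2" using a_pos by simp
      then show "norm (a / 2 * norm (d (Suc k)) ^ 2) \<le> Fr k - Fr (Suc k)"
        using Fr_step[of k] by simp
    qed
    then have "(\<lambda>k. norm (d (Suc k)) ^ 2) \<longlonglongrightarrow> 0"
      using tendsto_mult_right_zero[of _ sequentially "2 / a"] a_pos by simp
    then have "(\<lambda>k. sqrt (norm (d (Suc k)) ^ 2)) \<longlonglongrightarrow> sqrt 0"
      by (rule tendsto_real_sqrt)
    then have "(\<lambda>k. norm (d (Suc k))) \<longlonglongrightarrow> 0" by simp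
    then have "(\<lambda>k. d (Suc k)) \<longlonglongrightarrow> 0" by (simp add: tendsto_norm_zero_iff)
    then show ?thesis by (rule LIMSEQ_imp_Suc)
  qed
  have gub: "g (x (Suc k)) \<le> ereal (Fr 0 - f (x (Suc k)))" for k
  proof -
    have "Fr k \<le> Fr 0" using decFr unfolding decseq_def by simp
    then show ?thesis using gfin[of k] gnm[of "x (Suc k)"] unfolding Fr_def
      by (cases "g (x (Suc k))") auto
  qed
  obtain M where M: "\<And>k. norm (Tk k) \<le> M"
    using Tk_bdd unfolding bounded_iff by blast
  define K where "K = real CARD('n) * real CARD('n) * M"
  have Kmv: "norm (Tk k *v w) \<le> K * norm w" for k w
    unfolding K_def by (rule mv_bound[OF M])
  have Kw: "\<bar>wnorm2 (Tk k) w\<bar> \<le> K * norm w ^ 2" for k w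
    unfolding K_def by (rule wnorm2_bound[OF M])
  have fcont: "isCont f z" for z
    using has_derivative_continuous[OF f_grad[of z]] .
  have gcont: "isCont gradf z" for z
    using f_C1 by (simp add: continuous_on_eq_continuous_at)
  have wlim: "(\<lambda>j. wnorm2 (Tk (r j)) (w j)) \<longlonglongrightarrow> 0" if "w \<longlonglongrightarrow> 0" for w r
  proof (rule Lim_null_comparison)
    show "eventually (\<lambda>j. norm (wnorm2 (Tk (r j)) (w j)) \<le> K * norm (w j) ^ 2) sequentially"
      using Kw by (intro always_eventually allI) simp
    have "(\<lambda>j. norm (w j)) \<longlonglongrightarrow> 0" using that by (rule tendsto_norm_zero)
    then have "(\<lambda>j. norm (w j) ^ 2) \<longlonglongrightarrow> 0 ^ 2" by (rule tendsto_power)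
    then have "(\<lambda>j. norm (w j) ^ 2) \<longlonglongrightarrow> 0" by simp
    then show "(\<lambda>j. K * norm (w j) ^ 2) \<longlonglongrightarrow> 0"
      by (rule tendsto_mult_right_zero)
  qed
  have stat: "stationary_point (\<lambda>z. ereal (f z) + g z) xb"
    if r: "strict_mono r" and Xl: "(\<lambda>j. x (Suc (r j))) \<longlonglongrightarrow> xb" for r xb
  proof -
    define X where "X j = x (Suc (r j))" for j
    define Y where "Y j = y (r j)" for j
    have Xl': "X \<longlonglongrightarrow> xb" using Xl unfolding X_def .
    have dr: "(\<lambda>j. d (r j)) \<longlonglongrightarrow> 0"
      using LIMSEQ_subseq_LIMSEQ[OF dlim r] by (simp add: o_def)
    have XY: "X j - Y j = d (r j)" for j unfolding X_def Y_def d_def by simp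
    have Yl: "Y \<longlonglongrightarrow> xb"
    proof -
      have "(\<lambda>j. X j - d (r j)) \<longlonglongrightarrow> xb - 0" by (rule tendsto_diff[OF Xl' dr])
      moreover have "X j - d (r j) = Y j" for j using XY[of j] by (simp add: algebra_simps)
      ultimately show ?thesis by simp
    qed
    have fX: "(\<lambda>j. f (X j)) \<longlonglongrightarrow> f xb" by (rule isCont_tendsto_compose[OF fcont Xl'])
    have gX: "(\<lambda>j. gradf (X j)) \<longlonglongrightarrow> gradf xb" by (rule isCont_tendsto_compose[OF gcont Xl'])
    have gY: "(\<lambda>j. gradf (Y j)) \<longlonglongrightarrow> gradf xb" by (rule isCont_tendsto_compose[OF gcont Yl])
    have lsc: "g xb \<le> liminf (\<lambda>j. g (X j))" by (rule lsc_seq[OF g_lsc Xl'])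
    have gxb_fin: "g xb \<noteq> \<infinity>"
    proof -
      have "liminf (\<lambda>j. g (X j)) \<le> liminf (\<lambda>j. ereal (Fr 0 - f (X j)))"
        by (rule Liminf_mono) (use gub in \<open>simp add: X_def\<close>)
      also have "\<dots> = ereal (Fr 0 - f xb)"
        by (rule lim_imp_Liminf) (auto intro!: tendsto_ereal tendsto_diff fX)
      finally show ?thesis using lsc by auto
    qed
    obtain \<gamma> where gam: "g xb = ereal \<gamma>" using gxb_fin gnm[of xb] by (cases "g xb") auto
    define eps where "eps j = gradf (Y j) \<bullet> (xb - X j)
        + (wnorm2 (Tk (r j)) (xb - Y j) - wnorm2 (Tk (r j)) (X j - Y j)) / 2" for j
    have gXub: "g (X j) \<le> ereal (\<gamma> + eps j)" for j
    proof -
      have "g (X j) + ereal (f (Y j) + gradf (Y j) \<bullet> (X j - Y j) + wnorm2 (Tk (r j)) (X j - Y j) / 2)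
          \<le> g xb + ereal (f (Y j) + gradf (Y j) \<bullet> (xb - Y j) + wnorm2 (Tk (r j)) (xb - Y j) / 2)"
        using argmin[of "r j" xb "beta (r j)"] unfolding X_def Y_def y_def .
      then show ?thesis using gam gfin[of "r j"] gnm[of "X j"] unfolding X_def[symmetric] eps_def
        by (cases "g (X j)") (auto simp: inner_diff_right diff_divide_distrib)
    qed
    have eps0: "eps \<longlonglongrightarrow> 0"
    proof -
      have a1: "(\<lambda>j. gradf (Y j) \<bullet> (xb - X j)) \<longlonglongrightarrow> gradf xb \<bullet> (xb - xb)"
        by (intro tendsto_inner gY tendsto_diff tendsto_const Xl')
      have "(\<lambda>j. xb - Y j) \<longlonglongrightarrow> xb - xb" by (intro tendsto_diff tendsto_const Yl)
      then have a2: "(\<lambda>j. wnorm2 (Tk (r j)) (xb - Y j)) \<longlonglongrightarrow> 0" by (intro wlim) simp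
      have a3: "(\<lambda>j. wnorm2 (Tk (r j)) (X j - Y j)) \<longlonglongrightarrow> 0"
        unfolding XY by (rule wlim[OF dr])
      show ?thesis unfolding eps_def
        using tendsto_add[OF a1 tendsto_divide[OF tendsto_diff[OF a2 a3] tendsto_const[of 2]]] by simp
    qed
    have gXl: "(\<lambda>j. g (X j)) \<longlonglongrightarrow> g xb"
    proof -
      have "limsup (\<lambda>j. g (X j)) \<le> limsup (\<lambda>j. ereal (\<gamma> + eps j))"
        by (rule Limsup_mono) (use gXub in simp)
      also have "\<dots> = ereal \<gamma>"
        by (rule lim_imp_Limsup) (auto intro!: tendsto_ereal tendsto_add[OF tendsto_const eps0, simplified])
      finally have ls: "limsup (\<lambda>j. g (X j)) \<le> ereal \<gamma>" .
      have li: "ereal \<gamma> \<le> liminf (\<lambda>j. g (X j))" using lsc gam by simp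
      have "liminf (\<lambda>j. g (X j)) \<le> limsup (\<lambda>j. g (X j))" by (rule Liminf_le_Limsup) simp
      then have "liminf (\<lambda>j. g (X j)) = ereal \<gamma>" "limsup (\<lambda>j. g (X j)) = ereal \<gamma>"
        using ls li by auto
      then show ?thesis unfolding gam by (intro Liminf_eq_Limsup) auto
    qed
    have FXl: "(\<lambda>j. ereal (f (X j)) + g (X j)) \<longlonglongrightarrow> ereal (f xb) + g xb"
      by (rule tendsto_add_ereal) (use gam gXl fX in auto)
    define V where "V j = gradf (X j) - gradf (Y j) - Tk (r j) *v d (r j)" for j
    have Vsub: "V j \<in> frechet_subdiff (\<lambda>z. ereal (f z) + g z) (X j)" for j
    proof -
      obtain cg where cg: "g (X j) = ereal cg"
        using gfin[of "r j"] gnm[of "X j"] unfolding X_def by (cases "g (x (Suc (r j)))") auto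
      have mn: "g (X j) + ereal (gradf (Y j) \<bullet> (X j - Y j) + wnorm2 (Tk (r j)) (X j - Y j) / 2)
                 \<le> g z + ereal (gradf (Y j) \<bullet> (z - Y j) + wnorm2 (Tk (r j)) (z - Y j) / 2)" for z
      proof (rule ereal_cancel[where c = "f (Y j)"])
        show "g (X j) \<noteq> -\<infinity>" by (rule gnm)
        show "g (X j) + ereal (f (Y j) + (gradf (Y j) \<bullet> (X j - Y j) + wnorm2 (Tk (r j)) (X j - Y j) / 2))
                 \<le> g z + ereal (f (Y j) + (gradf (Y j) \<bullet> (z - Y j) + wnorm2 (Tk (r j)) (z - Y j) / 2))"
          using argmin[of "r j" z "beta (r j)"] unfolding X_def Y_def y_def by (simp add: add.assoc)
      qed
      have "gradf (X j) - gradf (Y j) - Tk (r j) *v (X j - Y j)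
          \<in> frechet_subdiff (\<lambda>z. ereal (f z) + g z) (X j)"
        by (rule min_frechet[OF f_grad Tk_sym cg mn])
      then show ?thesis unfolding V_def XY .
    qed
    have V0: "V \<longlonglongrightarrow> 0"
    proof -
      have Td: "(\<lambda>j. Tk (r j) *v d (r j)) \<longlonglongrightarrow> 0"
      proof (rule Lim_null_comparison)
        show "eventually (\<lambda>j. norm (Tk (r j) *v d (r j)) \<le> K * norm (d (r j))) sequentially"
          using Kmv by (intro always_eventually allI) simp
        show "(\<lambda>j. K * norm (d (r j))) \<longlonglongrightarrow> 0"
          by (rule tendsto_mult_right_zero[OF tendsto_norm_zero[OF dr]])
      qed
      show ?thesis unfolding V_def using tendsto_diff[OF tendsto_diff[OF gX gY] Td] by simp
    qed
    have edom: "xb \<in> edom (\<lambda>z. ereal (f z) + g z)" using gam by (simp add: edom_def)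
    have "0 \<in> limiting_subdiff (\<lambda>z. ereal (f z) + g z) xb"
      unfolding limiting_subdiff_def using edom Xl' FXl Vsub V0 by auto
    then show ?thesis unfolding stationary_point_def using edom by simp
  qed
  show ?thesis using decF stat by blast
qed

end
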